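(* Let $A\in\mathbb{R}^{n\times n}$ and $C\in\mathbb{R}^{p\times n}$ with $C\neq 0$ and $\operatorname{rank} C = p$. Then there exist real matrices $L\in\mathbb{R}^{n\times p}$ and $F\in\mathbb{R}^{n\times p}$ such that the $(n+p)\times(n+p)$ real matrix $$\begin{bmatrix} A - LC & F \\ -C & I_p \end{bmatrix}$$ is Schur stable if and only if the pair $(A,C)$ is detectable.
   Context: A real square matrix is Schur stable if all of its eigenvalues $\lambda\in\mathbb{C}$ satisfy $|\lambda|<1$. The pair $(A,C)$ is detectable if there exists $K\in\mathbb{R}^{n\times p}$ such that $A+KC$ is Schur stable (equivalently, $\operatorname{rank}\begin{bmatrix} C \\ zI_n - A\end{bmatrix} = n$ for every $z\in\mathbb{C}$ with $|z|\ge 1$). Motivation: for the discrete-time system $x(k+1)=Ax(k)+Bu(k)$, $y(k)=Cx(k)$, the system $\hat x(k+1)=(A-LC)\hat x(k)+Ly(k)+Bu(k)+Fv(k)$, $v(k+1)=v(k)+y(k)-C\hat x(k)$ is called a full-order proportional-integral observer exactly when the displayed matrix is Schur stable. *)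

theory Defs
  imports "HOL-Analysis.Analysis"
begin

definition cmat :: "real^'n^'m \<Rightarrow> complex^'n^'m" where
  "cmat A = (\<chi> i j. complex_of_real (A $ i $ j))"

definition schur_stable :: "real^'n^'n \<Rightarrow> bool" where
  "schur_stable A \<longleftrightarrow>
     (\<forall>z::complex. (\<exists>v::complex^'n. v \<noteq> 0 \<and> cmat A *v v = z *s v) \<longrightarrow> norm z < 1)"

definition detectable :: "real^'n^'n \<Rightarrow> real^'n^'p \<Rightarrow> bool" where
  "detectable A C \<longleftrightarrow> (\<exists>K::real^'p^'n. schur_stable (A + K ** C))"

definition pi_block :: "real^'n^'n \<Rightarrow> real^'n^'p \<Rightarrow> real^'p^'n \<Rightarrow> real^'p^'n
    \<Rightarrow> real^('n + 'p)^('n + 'p)" where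
  "pi_block A C L F = (\<chi> i j. case (i, j) of
       (Inl a, Inl b) \<Rightarrow> (A - L ** C) $ a $ b
     | (Inl a, Inr b) \<Rightarrow> F $ a $ b
     | (Inr a, Inl b) \<Rightarrow> - (C $ a $ b)
     | (Inr a, Inr b) \<Rightarrow> (mat 1 :: real^'p^'p) $ a $ b)"

end

theory Submission
  imports Defs Jordan_Normal_Form.Spectral_Radius
begin

no_notation Matrix.vec_index (infixl "$" 100)
no_notation Matrix.scalar_prod (infix "\<bullet>" 70)


abbreviation mone :: "'a::semiring_1^'n^'n" where "mone \<equiv> Finite_Cartesian_Product.mat 1"

lemma inv_ok:
  fixes A :: "'a::field^'n^'n"
  assumes "invertible A"
  shows "A ** matrix_inv A = mone" "matrix_inv A ** A = mone"
proof -
  from assms obtain B where "A ** B = mone \<and> B ** A = mone" unfolding invertible_def by blast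
  hence "A ** matrix_inv A = mone \<and> matrix_inv A ** A = mone"
    unfolding matrix_inv_def by (rule someI)
  thus "A ** matrix_inv A = mone" "matrix_inv A ** A = mone" by auto
qed

lemma invertible_ker:
  fixes A :: "real^'n^'n"
  assumes "\<And>x. A *v x = 0 \<Longrightarrow> x = 0"
  shows "invertible A"
  using assms matrix_left_invertible_ker invertible_left_inverse by blast

lemma cmat_mult: "cmat (A ** B) = cmat A ** cmat B"
  by (simp add: cmat_def matrix_matrix_mult_def Finite_Cartesian_Product.vec_eq_iff)
lemma cmat_add: "cmat (A + B) = cmat A + cmat B"
  by (simp add: cmat_def Finite_Cartesian_Product.vec_eq_iff)
lemma cmat_diff: "cmat (A - B) = cmat A - cmat B"
  by (simp add: cmat_def Finite_Cartesian_Product.vec_eq_iff)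
lemma cmat_neg: "cmat (- A) = - cmat A"
  by (simp add: cmat_def Finite_Cartesian_Product.vec_eq_iff)
lemma cmat_one: "cmat (mone :: real^'n^'n) = mone"
  by (simp add: cmat_def Finite_Cartesian_Product.vec_eq_iff Finite_Cartesian_Product.mat_def)

lemma inj_CT:
  fixes C :: "real^'n^'p"
  assumes "rank C = CARD('p)"
  shows "transpose C *v y = 0 \<Longrightarrow> y = 0"
proof -
  have "rank (transpose C) = CARD('p)" using assms rank_transpose by metis
  hence "inj ((*v) (transpose C))" using full_rank_injective by blast
  moreover assume "transpose C *v y = 0"
  ultimately show "y = 0" by (metis inj_eq matrix_vector_mult_0_right)
qed

lemma inner_CT: "(y::real^'p) \<bullet> (C *v x) = (transpose C *v y) \<bullet> x"
  by (metis dot_lmul_matrix transpose_matrix_vector vector_transpose_matrix transpose_transpose)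

lemma CCT_inv:
  fixes C :: "real^'n^'p"
  assumes "rank C = CARD('p)"
  shows "invertible (C ** transpose C)"
proof (rule invertible_ker)
  fix y :: "real^'p" assume "(C ** transpose C) *v y = 0"
  hence "y \<bullet> (C *v (transpose C *v y)) = 0" by (metis matrix_vector_mul_assoc inner_zero_right)
  hence "(transpose C *v y) \<bullet> (transpose C *v y) = 0" by (metis inner_CT)
  hence "transpose C *v y = 0" by simp
  thus "y = 0" using inj_CT[OF assms] by blast
qed

lemma sum_plus: "(\<Sum>i\<in>(UNIV::('a::finite+'b::finite) set). g i) = (\<Sum>a\<in>UNIV. g (Inl a)) + (\<Sum>b\<in>UNIV. g (Inr b))"
  using sum.Plus[of "UNIV::'a set" "UNIV::'b set" g] by (simp add: o_def)

definition xs :: "'a^('n::finite+'p::finite) \<Rightarrow> 'a^'n" where "xs v = (\<chi> a. v $ Inl a)"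
definition ys :: "'a^('n::finite+'p::finite) \<Rightarrow> 'a^'p" where "ys v = (\<chi> a. v $ Inr a)"

lemma xs_ys_zero: "xs v = 0 \<Longrightarrow> ys v = 0 \<Longrightarrow> v = 0"
  unfolding xs_def ys_def Finite_Cartesian_Product.vec_eq_iff by (metis sum.exhaust zero_index vec_lambda_beta)

lemma hdelta: fixes b :: "'a::finite" shows "(\<Sum>ba\<in>UNIV. complex_of_real (if b = ba then 1 else 0) * w ba) = w b"
proof -
  have eq: "(\<lambda>ba. complex_of_real (if b = ba then 1 else 0) * w ba) = (\<lambda>ba. if b = ba then w ba else 0)" by auto
  show ?thesis unfolding eq by simp
qed

lemma block_mult:
  "(cmat (pi_block A C L F) *v v) $ Inl a = (cmat (A - L ** C) *v xs v + cmat F *v ys v) $ a"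
  "(cmat (pi_block A C L F) *v v) $ Inr b = (ys v - cmat C *v xs v) $ b"
  by (simp_all add: matrix_vector_mult_def cmat_def pi_block_def sum_plus xs_def ys_def
        Finite_Cartesian_Product.mat_def sum_negf hdelta)

lemma mm_add_r: "((A::'a::semiring_1^'n^'m) + B) ** C = A ** C + B ** C"
  by (simp add: matrix_matrix_mult_def Finite_Cartesian_Product.vec_eq_iff sum.distrib distrib_right)
lemma mm_diff_r: "((A::'a::ring_1^'n^'m) - B) ** C = A ** C - B ** C"
  by (simp add: matrix_matrix_mult_def Finite_Cartesian_Product.vec_eq_iff sum_subtractf left_diff_distrib)
lemma mm_neg_l: "(- (A::'a::ring_1^'n^'m)) ** C = - (A ** C)"
  by (simp add: matrix_matrix_mult_def Finite_Cartesian_Product.vec_eq_iff sum_negf)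
lemma mm_neg_r: "(A::'a::ring_1^'n^'m) ** (- C) = - (A ** C)"
  by (simp add: matrix_matrix_mult_def Finite_Cartesian_Product.vec_eq_iff sum_negf)
lemma mv_neg_l: "(- (A::'a::ring_1^'n^'m)) *v x = - (A *v x)"
  by (simp add: matrix_vector_mult_def Finite_Cartesian_Product.vec_eq_iff sum_negf)

lemma mv_neg_r: "(A::'a::ring_1^'n^'m) *v (- x) = - (A *v x)"
  by (simp add: matrix_vector_mult_def Finite_Cartesian_Product.vec_eq_iff sum_negf)

lemma back_dir:
  fixes A :: "real^'n^'n" and C :: "real^'n^'p" and K :: "real^'p^'n"
  assumes rank: "rank C = CARD('p)" and K: "schur_stable (A + K ** C)"
  defines "X \<equiv> - (transpose C ** matrix_inv (C ** transpose C))"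
  defines "L \<equiv> - K - X"
  defines "F \<equiv> (A - L ** C) ** X"
  shows "schur_stable (pi_block A C L F)"
  unfolding schur_stable_def
proof (intro allI impI)
  fix z :: complex
  assume "\<exists>v. v \<noteq> 0 \<and> cmat (pi_block A C L F) *v v = z *s v"
  then obtain v where v0: "v \<noteq> 0" and ev: "cmat (pi_block A C L F) *v v = z *s v" by blast
  define x where "x = xs v"
  define y where "y = ys v"
  define E where "E = cmat (A - L ** C)"
  define Xc where "Xc = cmat X"
  define Cc where "Cc = cmat C"
  have hx: "E *v x + E *v (Xc *v y) = z *s x"
  proof -
    have cF: "cmat F = E ** Xc" unfolding F_def E_def Xc_def by (rule cmat_mult)
    have "\<And>a. (cmat (A - L ** C) *v xs v + cmat F *v ys v) $ a = (z *s x) $ a"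
      using ev block_mult(1)[of A C L F v] unfolding x_def by (metis vector_scalar_mult_def vec_lambda_beta xs_def)
    hence "E *v x + cmat F *v y = z *s x" unfolding E_def x_def y_def by (simp add: Finite_Cartesian_Product.vec_eq_iff)
    thus ?thesis unfolding cF by (simp add: matrix_vector_mul_assoc)
  qed
  have hy: "y - Cc *v x = z *s y"
  proof -
    have "\<And>b. (ys v - cmat C *v xs v) $ b = (z *s y) $ b"
      using ev block_mult(2)[of A C L F v] unfolding y_def by (metis vector_scalar_mult_def vec_lambda_beta ys_def)
    thus ?thesis unfolding Cc_def x_def y_def by (simp add: Finite_Cartesian_Product.vec_eq_iff)
  qed
  have CX: "Cc ** Xc = - mone"
  proof -
    have "C ** X = - mone" unfolding X_def using inv_ok(1)[OF CCT_inv[OF rank]]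
      by (simp add: mm_neg_r matrix_mul_assoc)
    thus ?thesis unfolding Cc_def Xc_def by (metis cmat_mult cmat_neg cmat_one)
  qed
  have AK: "cmat (A + K ** C) = E - Xc ** Cc"
  proof -
    have "A + K ** C = (A - L ** C) - X ** C" unfolding L_def by (simp add: mm_diff_r mm_neg_l)
    thus ?thesis unfolding E_def Xc_def Cc_def by (metis cmat_diff cmat_mult)
  qed
  define u where "u = x + Xc *v y"
  have Cxy: "Cc *v x = y - z *s y" using hy by (simp add: algebra_simps)
  have CXy: "Cc *v (Xc *v y) = - y" by (simp add: matrix_vector_mul_assoc CX mv_neg_l)
  have "(E - Xc ** Cc) *v u = z *s u"
  proof -
    have "(E - Xc ** Cc) *v u = E *v x + E *v (Xc *v y) - Xc *v (Cc *v x) - Xc *v (Cc *v (Xc *v y))"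
      unfolding u_def by (simp add: algebra_simps matrix_vector_mul_assoc[symmetric])
    also have "\<dots> = E *v x + E *v (Xc *v y) - Xc *v (y - z *s y) - Xc *v (- y)"
      by (simp only: Cxy CXy)
    also have "\<dots> = z *s x - Xc *v (y - z *s y) + Xc *v y"
      by (simp only: hx mv_neg_r diff_minus_eq_add)
    also have "\<dots> = z *s u" unfolding u_def
      by (simp add: algebra_simps vector_scalar_commute vector_add_ldistrib)
    finally show ?thesis .
  qed
  show "norm z < 1"
  proof (cases "u = 0")
    case False
    thus ?thesis using K AK \<open>(E - Xc ** Cc) *v u = z *s u\<close> unfolding schur_stable_def by metis
  next
    case True
    hence "x = - (Xc *v y)" unfolding u_def by (simp add: add_eq_0_iff)
    hence "Cc *v x = y" using CXy by (metis matrix_vector_mult_diff_distrib diff_0 minus_minus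
       matrix_vector_mult_0_right)
    hence "z *s y = 0" using hy by simp
    moreover have "y \<noteq> 0" using v0 xs_ys_zero \<open>x = - (Xc *v y)\<close> unfolding x_def y_def by fastforce
    ultimately have "z = 0" by simp
    thus ?thesis by simp
  qed
qed

fun mpow :: "'a::semiring_1^'m^'m \<Rightarrow> nat \<Rightarrow> 'a^'m^'m" where
  "mpow M 0 = mone"
| "mpow M (Suc k) = M ** mpow M k"

lemma mpow_comm: "mpow M k ** M = M ** mpow M k"
  by (induction k) (simp_all, metis matrix_mul_assoc)

lemma inner_expand:
  fixes B :: "real^'m^'m"
  shows "(B *v x) \<bullet> (B *v y) = (\<Sum>i\<in>UNIV. \<Sum>j\<in>UNIV. x$i * y$j * (\<Sum>l\<in>UNIV. B$l$i * B$l$j))"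
proof -
  have "(B *v x) \<bullet> (B *v y) = (\<Sum>l\<in>UNIV. (\<Sum>i\<in>UNIV. B$l$i * x$i) * (\<Sum>j\<in>UNIV. B$l$j * y$j))"
    by (simp add: inner_vec_def matrix_vector_mult_def)
  also have "\<dots> = (\<Sum>l\<in>UNIV. \<Sum>i\<in>UNIV. \<Sum>j\<in>UNIV. x$i * y$j * (B$l$i * B$l$j))"
    by (simp add: sum_product mult_ac)
  also have "\<dots> = (\<Sum>i\<in>UNIV. \<Sum>l\<in>UNIV. \<Sum>j\<in>UNIV. x$i * y$j * (B$l$i * B$l$j))"
    by (rule sum.swap)
  also have "\<dots> = (\<Sum>i\<in>UNIV. \<Sum>j\<in>UNIV. \<Sum>l\<in>UNIV. x$i * y$j * (B$l$i * B$l$j))"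
    by (intro sum.cong refl sum.swap)
  also have "\<dots> = (\<Sum>i\<in>UNIV. \<Sum>j\<in>UNIV. x$i * y$j * (\<Sum>l\<in>UNIV. B$l$i * B$l$j))"
    by (simp add: sum_distrib_left)
  finally show ?thesis .
qed

lemma inner_P:
  fixes P :: "real^'m^'m"
  shows "x \<bullet> (P *v y) = (\<Sum>i\<in>UNIV. \<Sum>j\<in>UNIV. x$i * y$j * P$i$j)"
  by (simp add: inner_vec_def matrix_vector_mult_def sum_distrib_left mult_ac)

lemma lyap:
  fixes M :: "real^'m^'m"
  assumes r: "0 < r" "r < 1" and bd: "\<And>k i j. \<bar>mpow M k $ i $ j\<bar> \<le> c * r^k"
  shows "\<exists>P. (\<forall>x y. x \<bullet> (P *v y) = y \<bullet> (P *v x)) \<and> (\<forall>x. x \<bullet> (P *v x) \<ge> x \<bullet> x) \<and>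
     (\<forall>x. (M *v x) \<bullet> (P *v (M *v x)) = x \<bullet> (P *v x) - x \<bullet> x)"
proof -
  define S where "S k i j = (\<Sum>l\<in>UNIV. mpow M k $ l $ i * mpow M k $ l $ j)" for k i j
  have smT: "summable (\<lambda>k. mpow M k $ l $ i * mpow M k $ l $ j)" for l i j
  proof (rule summable_comparison_test')
    show "summable (\<lambda>k. c * c * (r * r) ^ k)"
    proof -
      have "r * r < 1 * 1" using r by (intro mult_strict_mono) auto
      thus ?thesis using r by (intro summable_mult summable_geometric) simp
    qed
    show "norm (mpow M k $ l $ i * mpow M k $ l $ j) \<le> c * c * (r * r) ^ k" if "k \<ge> 0" for k
    proof -
      have "norm (mpow M k $ l $ i * mpow M k $ l $ j) = \<bar>mpow M k $ l $ i\<bar> * \<bar>mpow M k $ l $ j\<bar>"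
        by (simp add: abs_mult)
      also have "\<dots> \<le> (c * r^k) * (c * r^k)"
        using bd[of k l i] bd[of k l j] by (intro mult_mono) auto
      also have "\<dots> = c * c * (r * r) ^ k" by (simp add: power_mult_distrib mult_ac)
      finally show ?thesis .
    qed
  qed
  have smS: "summable (\<lambda>k. S k i j)" for i j
    unfolding S_def by (intro summable_sum smT)
  define P :: "real^'m^'m" where "P = (\<chi> i j. suminf (\<lambda>k. S k i j))"
  define f where "f x y k = (mpow M k *v x) \<bullet> (mpow M k *v y)" for x y k
  have fsums: "(f x y) sums (x \<bullet> (P *v y))" for x y
  proof -
    have "(\<lambda>k. \<Sum>i\<in>UNIV. \<Sum>j\<in>UNIV. x$i * y$j * S k i j) sums (\<Sum>i\<in>UNIV. \<Sum>j\<in>UNIV. x$i * y$j * P$i$j)"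
      unfolding P_def using smS by (intro sums_sum sums_mult) (simp add: summable_sums)
    moreover have "f x y = (\<lambda>k. \<Sum>i\<in>UNIV. \<Sum>j\<in>UNIV. x$i * y$j * S k i j)"
      unfolding f_def S_def by (simp only: inner_expand)
    ultimately show ?thesis by (simp only: inner_P)
  qed
  have sym: "x \<bullet> (P *v y) = y \<bullet> (P *v x)" for x y
  proof -
    have "f x y = f y x" unfolding f_def by (simp add: inner_commute fun_eq_iff)
    thus ?thesis using fsums[of x y] fsums[of y x] sums_unique2 by metis
  qed
  have step: "(M *v x) \<bullet> (P *v (M *v x)) = x \<bullet> (P *v x) - x \<bullet> x" for x
  proof -
    have "f (M *v x) (M *v x) = (\<lambda>k. f x x (Suc k))"
      unfolding f_def by (simp add: fun_eq_iff matrix_vector_mul_assoc mpow_comm)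
    hence "(\<lambda>k. f x x (Suc k)) sums ((M *v x) \<bullet> (P *v (M *v x)))" using fsums by metis
    hence "f x x sums ((M *v x) \<bullet> (P *v (M *v x)) + f x x 0)" by (simp add: sums_Suc_iff)
    moreover have "f x x 0 = x \<bullet> x" unfolding f_def by simp
    ultimately show ?thesis using fsums[of x x] sums_unique2 by fastforce
  qed
  have pos: "x \<bullet> (P *v x) \<ge> x \<bullet> x" for x
  proof -
    have "0 \<le> (M *v x) \<bullet> (P *v (M *v x))"
    proof (rule sums_le[OF _ sums_zero fsums[of "M *v x" "M *v x"]])
      show "0 \<le> f (M *v x) (M *v x) n" for n unfolding f_def by simp
    qed
    thus ?thesis using step[of x] by simp
  qed
  show ?thesis using sym pos step by blast
qed

lemma re_im_eig:
  fixes B :: "real^'n^'n"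
  assumes "cmat B *v v = z *s v"
  shows "B *v (\<chi> i. Re (v$i)) = Re z *\<^sub>R (\<chi> i. Re (v$i)) - Im z *\<^sub>R (\<chi> i. Im (v$i))"
    and "B *v (\<chi> i. Im (v$i)) = Im z *\<^sub>R (\<chi> i. Re (v$i)) + Re z *\<^sub>R (\<chi> i. Im (v$i))"
proof -
  have c: "(\<Sum>j\<in>UNIV. complex_of_real (B$i$j) * v$j) = z * v$i" for i
    using assms unfolding Finite_Cartesian_Product.vec_eq_iff by (simp add: matrix_vector_mult_def cmat_def)
  show "B *v (\<chi> i. Re (v$i)) = Re z *\<^sub>R (\<chi> i. Re (v$i)) - Im z *\<^sub>R (\<chi> i. Im (v$i))"
    unfolding Finite_Cartesian_Product.vec_eq_iff
  proof
    fix i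
    have "Re (\<Sum>j\<in>UNIV. complex_of_real (B$i$j) * v$j) = Re (z * v$i)" using c by simp
    thus "(B *v (\<chi> i. Re (v$i))) $ i = (Re z *\<^sub>R (\<chi> i. Re (v$i)) - Im z *\<^sub>R (\<chi> i. Im (v$i))) $ i"
      by (simp add: matrix_vector_mult_def)
  qed
  show "B *v (\<chi> i. Im (v$i)) = Im z *\<^sub>R (\<chi> i. Re (v$i)) + Re z *\<^sub>R (\<chi> i. Im (v$i))"
    unfolding Finite_Cartesian_Product.vec_eq_iff
  proof
    fix i
    have "Im (\<Sum>j\<in>UNIV. complex_of_real (B$i$j) * v$j) = Im (z * v$i)" using c by simp
    thus "(B *v (\<chi> i. Im (v$i))) $ i = (Im z *\<^sub>R (\<chi> i. Re (v$i)) + Re z *\<^sub>R (\<chi> i. Im (v$i))) $ i"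
      by (simp add: matrix_vector_mult_def algebra_simps)
  qed
qed

lemma quad_rot:
  fixes P :: "real^'n^'n"
  assumes sab: "b \<bullet> (P *v a) = a \<bullet> (P *v b)"
  shows "(al *\<^sub>R a - be *\<^sub>R b) \<bullet> (P *v (al *\<^sub>R a - be *\<^sub>R b))
       + (be *\<^sub>R a + al *\<^sub>R b) \<bullet> (P *v (be *\<^sub>R a + al *\<^sub>R b))
       = (al\<^sup>2 + be\<^sup>2) * (a \<bullet> (P *v a) + b \<bullet> (P *v b))"
  by (simp add: algebra_simps inner_add_left inner_add_right inner_diff_left inner_diff_right sab power2_eq_square)

lemma detect_from_lyap:
  fixes A :: "real^'n^'n" and C :: "real^'n^'p" and P :: "real^'n^'n"
  assumes rank: "rank C = CARD('p)"
    and sym: "\<And>x y. x \<bullet> (P *v y) = y \<bullet> (P *v x)"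
    and pos: "\<And>x. x \<bullet> (P *v x) \<ge> x \<bullet> x"
    and dec: "\<And>w. C *v w = 0 \<Longrightarrow> (A *v w) \<bullet> (P *v (A *v w)) \<le> w \<bullet> (P *v w) - w \<bullet> w"
  shows "detectable A C"
proof -
  define q where "q x = x \<bullet> (P *v x)" for x
  have qnn: "q x \<ge> 0" for x using pos[of x] unfolding q_def by (meson inner_ge_zero order_trans)
  have Pinv: "invertible P"
  proof (rule invertible_ker)
    fix x assume "P *v x = 0"
    hence "x \<bullet> x \<le> 0" using pos[of x] by simp
    thus "x = 0" by (metis inner_eq_zero_iff inner_ge_zero order_antisym)
  qed
  define Q where "Q = matrix_inv P"
  have PQ: "P ** Q = mone" and QP: "Q ** P = mone" unfolding Q_def using inv_ok[OF Pinv] by auto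
  define CT where "CT = transpose C"
  have CTi: "w \<bullet> (CT *v s) = (C *v w) \<bullet> s" for w s
    unfolding CT_def using inner_CT[of w "transpose C" s] by simp
  define G where "G = C ** Q ** CT"
  have Ginv: "invertible G"
  proof (rule invertible_ker)
    fix y assume Gy: "G *v y = 0"
    define u where "u = CT *v y"
    define t where "t = Q *v u"
    have Pt: "P *v t = u" unfolding t_def by (simp add: matrix_vector_mul_assoc PQ)
    have "y \<bullet> (G *v y) = u \<bullet> (Q *v u)"
      unfolding G_def u_def by (simp add: matrix_vector_mul_assoc[symmetric] inner_CT CT_def)
    also have "\<dots> = t \<bullet> (P *v t)" unfolding t_def[symmetric] Pt[symmetric] by (simp add: inner_commute matrix_vector_mul_assoc QP)
    finally have "t \<bullet> (P *v t) = 0" using Gy by simp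
    hence "t \<bullet> t \<le> 0" using pos[of t] by simp
    hence "t = 0" by (metis inner_eq_zero_iff inner_ge_zero order_antisym)
    hence "u = 0" using Pt by simp
    thus "y = 0" using inj_CT[OF rank] unfolding u_def CT_def by blast
  qed
  define Gi where "Gi = matrix_inv G"
  have GGi: "G ** Gi = mone" unfolding Gi_def using inv_ok[OF Ginv] by auto
  define N where "N = Q ** CT ** Gi"
  have CN: "C ** N = mone" using GGi unfolding N_def G_def by (simp add: matrix_mul_assoc)
  have PN: "P ** N = CT ** Gi" unfolding N_def by (simp add: matrix_mul_assoc PQ)
  define K where "K = - (A ** N)"
  define B where "B = A + K ** C"
  define Pi where "Pi x = x - N *v (C *v x)" for x
  have BPi: "B *v x = A *v Pi x" for x
    unfolding B_def K_def Pi_def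
    by (simp add: algebra_simps mm_neg_l mv_neg_l matrix_vector_mul_assoc matrix_mul_assoc)
  have CPi: "C *v Pi x = 0" for x
    unfolding Pi_def by (simp add: matrix_vector_mult_diff_distrib matrix_vector_mul_assoc matrix_mul_assoc CN)
  have qPi: "q (Pi x) \<le> q x" for x
  proof -
    define w where "w = Pi x"
    define d where "d = N *v (C *v x)"
    have xwd: "x = w + d" unfolding w_def d_def Pi_def by simp
    have cross: "w \<bullet> (P *v d) = 0"
    proof -
      have "w \<bullet> (P *v d) = w \<bullet> (CT *v (Gi *v (C *v x)))"
        unfolding d_def by (metis matrix_vector_mul_assoc PN)
      also have "\<dots> = 0" unfolding CTi using CPi unfolding w_def by simp
      finally show ?thesis .
    qed
    have "q x = q w + (w \<bullet> (P *v d) + d \<bullet> (P *v w)) + q d"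
      unfolding q_def xwd by (simp add: algebra_simps inner_add_left inner_add_right)
    also have "\<dots> = q w + q d" using cross sym[of d w] by simp
    finally show ?thesis using qnn[of d] unfolding w_def by simp
  qed
  have qB: "q (B *v x) \<le> q x - Pi x \<bullet> Pi x" for x
    using dec[OF CPi[of x]] qPi[of x] unfolding BPi q_def by simp
  have "schur_stable B"
    unfolding schur_stable_def
  proof (intro allI impI)
    fix z :: complex
    assume "\<exists>v. v \<noteq> 0 \<and> cmat B *v v = z *s v"
    then obtain v where v0: "v \<noteq> 0" and ev: "cmat B *v v = z *s v" by blast
    define a where "a = (\<chi> i. Re (v$i))"
    define b where "b = (\<chi> i. Im (v$i))"
    define al where "al = Re z"
    define be where "be = Im z"
    have Ba: "B *v a = al *\<^sub>R a - be *\<^sub>R b" and Bb: "B *v b = be *\<^sub>R a + al *\<^sub>R b"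
      using re_im_eig[OF ev] unfolding a_def b_def al_def be_def by auto
    show "norm z < 1"
    proof (rule ccontr)
      assume "\<not> norm z < 1"
      hence "1 \<le> (norm z)\<^sup>2" by (simp add: one_le_power)
      hence s1: "1 \<le> al\<^sup>2 + be\<^sup>2" unfolding al_def be_def by (simp add: cmod_power2)
      have "(al\<^sup>2 + be\<^sup>2) * (q a + q b) = q (B *v a) + q (B *v b)"
        unfolding Ba Bb q_def by (rule quad_rot[symmetric]) (rule sym)
      also have "\<dots> \<le> q a + q b - (Pi a \<bullet> Pi a + Pi b \<bullet> Pi b)" using qB[of a] qB[of b] by simp
      finally have "Pi a \<bullet> Pi a + Pi b \<bullet> Pi b \<le> (1 - (al\<^sup>2 + be\<^sup>2)) * (q a + q b)"
        by (simp add: algebra_simps)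
      also have "\<dots> \<le> 0" using s1 qnn[of a] qnn[of b] by (intro mult_nonpos_nonneg) auto
      finally have "Pi a = 0 \<and> Pi b = 0"
        by (metis add_nonneg_nonneg inner_ge_zero inner_eq_zero_iff add_nonneg_eq_0_iff order_antisym)
      hence "B *v a = 0" "B *v b = 0" using BPi by auto
      hence e1: "al *\<^sub>R a - be *\<^sub>R b = 0" and e2: "be *\<^sub>R a + al *\<^sub>R b = 0" using Ba Bb by auto
      have "(al\<^sup>2 + be\<^sup>2) *\<^sub>R a = al *\<^sub>R (al *\<^sub>R a - be *\<^sub>R b) + be *\<^sub>R (be *\<^sub>R a + al *\<^sub>R b)"
        by (simp add: algebra_simps power2_eq_square)
      hence "(al\<^sup>2 + be\<^sup>2) *\<^sub>R a = 0" using e1 e2 by simp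
      moreover have sne: "al\<^sup>2 + be\<^sup>2 \<noteq> 0" using s1 by linarith
      ultimately have a0: "a = 0" by (metis scaleR_eq_0_iff)
      have "(al\<^sup>2 + be\<^sup>2) *\<^sub>R b = al *\<^sub>R (be *\<^sub>R a + al *\<^sub>R b) - be *\<^sub>R (al *\<^sub>R a - be *\<^sub>R b)"
        by (simp add: algebra_simps power2_eq_square)
      hence "(al\<^sup>2 + be\<^sup>2) *\<^sub>R b = 0" using e1 e2 by simp
      hence b0: "b = 0" using sne by (metis scaleR_eq_0_iff)
      have "v = 0" using a0 b0 unfolding a_def b_def Finite_Cartesian_Product.vec_eq_iff by (simp add: complex_eq_iff)
      thus False using v0 by simp
    qed
  qed
  thus ?thesis unfolding detectable_def B_def by blast
qed

definition blk :: "real^'n \<Rightarrow> real^('n::finite+'p::finite)" where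
  "blk w = (\<chi> i. case i of Inl a \<Rightarrow> w $ a | Inr b \<Rightarrow> 0)"

lemma blk_inner_P:
  fixes P :: "real^('n::finite+'p::finite)^('n+'p)"
  shows "u \<bullet> ((\<chi> a b. P $ Inl a $ Inl b) *v w) = (blk u :: real^('n+'p)) \<bullet> (P *v blk w)"
  by (simp add: inner_vec_def matrix_vector_mult_def sum_plus blk_def)

lemma blk_inner: "(blk u :: real^('n::finite+'p::finite)) \<bullet> blk w = u \<bullet> w"
  by (simp add: inner_vec_def sum_plus blk_def)

lemma blk_M:
  fixes A :: "real^'n^'n" and C :: "real^'n^'p" and L F :: "real^'p^'n"
  assumes "C *v w = 0"
  shows "pi_block A C L F *v blk w = blk (A *v w)"
proof -
  have l: "(pi_block A C L F *v blk w) $ Inl a = ((A - L ** C) *v w) $ a" for a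
    by (simp add: matrix_vector_mult_def pi_block_def blk_def sum_plus)
  have r: "(pi_block A C L F *v blk w) $ Inr b = - (C *v w) $ b" for b
    by (simp add: matrix_vector_mult_def pi_block_def blk_def sum_plus sum_negf)
  have "(A - L ** C) *v w = A *v w" using assms
    by (simp add: matrix_vector_mult_diff_rdistrib matrix_vector_mul_assoc[symmetric])
  thus ?thesis using l r assms unfolding Finite_Cartesian_Product.vec_eq_iff blk_def
    by (metis (no_types, lifting) neg_0_equal_iff_equal old.sum.exhaust old.sum.simps(5) old.sum.simps(6) vec_lambda_beta zero_index)
qed

lemma fwd_from_decay:
  fixes A :: "real^'n^'n" and C :: "real^'n^'p" and L F :: "real^'p^'n"
  assumes rank: "rank C = CARD('p)"
    and r: "0 < r" "r < 1" and bd: "\<And>k i j. \<bar>mpow (pi_block A C L F) k $ i $ j\<bar> \<le> c * r^k"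
  shows "detectable A C"
proof -
  let ?M = "pi_block A C L F"
  obtain P where sym: "\<And>x y. x \<bullet> (P *v y) = y \<bullet> (P *v x)" and pos: "\<And>x. x \<bullet> (P *v x) \<ge> x \<bullet> x"
    and step: "\<And>x. (?M *v x) \<bullet> (P *v (?M *v x)) = x \<bullet> (P *v x) - x \<bullet> x"
    using lyap[OF r bd] by blast
  define P11 :: "real^'n^'n" where "P11 = (\<chi> a b. P $ Inl a $ Inl b)"
  have e: "u \<bullet> (P11 *v w) = (blk u :: real^('n+'p)) \<bullet> (P *v blk w)" for u w
    unfolding P11_def by (rule blk_inner_P)
  show ?thesis
  proof (rule detect_from_lyap[OF rank, of P11])
    show "x \<bullet> (P11 *v y) = y \<bullet> (P11 *v x)" for x y unfolding e using sym by blast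
    show "x \<bullet> (P11 *v x) \<ge> x \<bullet> x" for x unfolding e using pos[of "blk x"] blk_inner by metis
    show "(A *v w) \<bullet> (P11 *v (A *v w)) \<le> w \<bullet> (P11 *v w) - w \<bullet> w" if "C *v w = 0" for w
      unfolding e using step[of "blk w"] blk_M[OF that, of A L F] by (simp add: blk_inner)
  qed
qed



definition idx :: "'m::finite \<Rightarrow> nat" where
  "idx = (SOME h. bij_betw h (UNIV::'m set) {0..<CARD('m)})"

lemma idx_bij: "bij_betw (idx :: 'm::finite \<Rightarrow> nat) UNIV {0..<CARD('m)}"
proof -
  have "\<exists>h. bij_betw h (UNIV::'m set) {0..<CARD('m)}"
    by (rule ex_bij_betw_finite_nat[OF finite_class.finite_UNIV])
  thus ?thesis unfolding idx_def by (rule someI_ex)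
qed

definition fr :: "nat \<Rightarrow> 'm::finite" where "fr = inv_into UNIV idx"

lemma fr_bij: "bij_betw (fr :: nat \<Rightarrow> 'm::finite) {0..<CARD('m)} UNIV"
  unfolding fr_def using bij_betw_inv_into[OF idx_bij] by blast

lemma fr_idx[simp]: "fr (idx (a::'m::finite)) = a"
  unfolding fr_def using idx_bij bij_betw_imp_inj_on inv_into_f_f by (metis UNIV_I)

lemma idx_fr[simp]: "l < CARD('m::finite) \<Longrightarrow> idx (fr l :: 'm) = l"
  unfolding fr_def using idx_bij[where 'm='m] by (simp add: bij_betw_def f_inv_into_f)

lemma idx_lt[simp]: "idx (a::'m::finite) < CARD('m)"
  using idx_bij[where 'm='m] unfolding bij_betw_def by auto

lemma sum_fr: "(\<Sum>l\<in>{0..<CARD('m::finite)}. g (fr l :: 'm)) = (\<Sum>a\<in>UNIV. g a)"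
  by (rule sum.reindex_bij_betw[OF fr_bij])

definition toM :: "real^'m::finite^'m \<Rightarrow> complex Matrix.mat" where
  "toM M = Matrix.mat CARD('m) CARD('m) (\<lambda>(i,j). complex_of_real (M $ fr i $ fr j))"

lemma toM_carrier: "toM (M::real^'m::finite^'m) \<in> carrier_mat CARD('m) CARD('m)"
  unfolding toM_def by simp

lemma toM_dims[simp]: "dim_row (toM (M::real^'m::finite^'m)) = CARD('m)" "dim_col (toM (M::real^'m::finite^'m)) = CARD('m)"
  unfolding toM_def by simp_all

lemma toM_index[simp]: "i < CARD('m::finite) \<Longrightarrow> j < CARD('m) \<Longrightarrow> toM (M::real^'m^'m) $$ (i,j) = complex_of_real (M $ fr i $ fr j)"
  unfolding toM_def by simp

lemma toM_mult: "toM ((A::real^'m::finite^'m) ** B) = toM A * toM B"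
proof (rule eq_matI)
  fix i j assume i: "i < dim_row (toM A * toM B)" and j: "j < dim_col (toM A * toM B)"
  hence i': "i < CARD('m)" and j': "j < CARD('m)" by auto
  have "(toM A * toM B) $$ (i,j) = (\<Sum>l\<in>{0..<CARD('m)}. complex_of_real (A $ fr i $ fr l) * complex_of_real (B $ fr l $ fr j))"
    using i' j' by (simp add: scalar_prod_def)
  also have "\<dots> = (\<Sum>a\<in>UNIV. complex_of_real (A $ fr i $ a) * complex_of_real (B $ a $ fr j))"
    by (rule sum_fr)
  also have "\<dots> = toM (A ** B) $$ (i,j)"
    using i' j' by (simp add: matrix_matrix_mult_def)
  finally show "toM (A ** B) $$ (i,j) = (toM A * toM B) $$ (i,j)" by simp
qed auto

lemma toM_one: "toM (mone::real^'m::finite^'m) = 1\<^sub>m CARD('m)"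
proof (rule eq_matI)
  fix i j assume "i < dim_row (1\<^sub>m CARD('m))" "j < dim_col (1\<^sub>m CARD('m))"
  hence i: "i < CARD('m)" and j: "j < CARD('m)" by auto
  have "(fr i :: 'm) = fr j \<longleftrightarrow> i = j" using i j by (metis idx_fr)
  thus "toM (mone::real^'m::finite^'m) $$ (i,j) = 1\<^sub>m CARD('m) $$ (i,j)"
    using i j by (simp add: Finite_Cartesian_Product.mat_def)
qed auto

lemma toM_pow: "toM (mpow (M::real^'m::finite^'m) k) = toM M ^\<^sub>m k"
proof (induction k)
  case 0 thus ?case by (simp add: toM_one)
next
  case (Suc k)
  have "mpow M (Suc k) = mpow M k ** M" by (simp add: mpow_comm)
  thus ?case using Suc by (simp add: toM_mult)
qed

lemma eig_to:
  fixes M :: "real^'m::finite^'m"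
  assumes "eigenvalue (toM M) z"
  shows "\<exists>v. v \<noteq> 0 \<and> cmat M *v v = z *s v"
proof -
  obtain v where vc: "v \<in> carrier_vec CARD('m)" and v0: "v \<noteq> 0\<^sub>v CARD('m)" and ev: "toM M *\<^sub>v v = z \<cdot>\<^sub>v v"
    using assms unfolding eigenvalue_def eigenvector_def by auto
  have dv: "dim_vec v = CARD('m)" using vc by auto
  define w :: "complex^'m" where "w = (\<chi> a. Matrix.vec_index v (idx a))"
  have "cmat M *v w = z *s w"
  proof -
    have "(cmat M *v w) $ a = (z *s w) $ a" for a
    proof -
      have "Matrix.vec_index (toM M *\<^sub>v v) (idx a) = Matrix.vec_index (z \<cdot>\<^sub>v v) (idx a)" using ev by simp
      moreover have "Matrix.vec_index (toM M *\<^sub>v v) (idx a) = (\<Sum>l\<in>{0..<CARD('m)}. complex_of_real (M $ a $ fr l) * Matrix.vec_index v l)"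
        using dv unfolding index_mult_mat_vec[OF toM_dims(1)[symmetric, THEN subst[where P="\<lambda>x. idx a < x"], OF idx_lt]] scalar_prod_def
        by (intro sum.cong) auto
      moreover have "Matrix.vec_index (z \<cdot>\<^sub>v v) (idx a) = z * Matrix.vec_index v (idx a)" using dv by simp
      ultimately have "(\<Sum>l\<in>{0..<CARD('m)}. complex_of_real (M $ a $ fr l) * Matrix.vec_index v l) = z * Matrix.vec_index v (idx a)"
        by simp
      note e1 = this
      have "(cmat M *v w) $ a = (\<Sum>b\<in>UNIV. complex_of_real (M $ a $ b) * Matrix.vec_index v (idx b))"
        by (simp add: matrix_vector_mult_def cmat_def w_def)
      also have "\<dots> = (\<Sum>l\<in>{0..<CARD('m)}. complex_of_real (M $ a $ fr l) * Matrix.vec_index v (idx (fr l :: 'm)))"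
        by (rule sum_fr[symmetric])
      also have "\<dots> = (\<Sum>l\<in>{0..<CARD('m)}. complex_of_real (M $ a $ fr l) * Matrix.vec_index v l)"
        by (intro sum.cong) auto
      also have "\<dots> = z * Matrix.vec_index v (idx a)" by (rule e1)
      finally show ?thesis by (simp add: w_def)
    qed
    thus ?thesis by (simp add: Finite_Cartesian_Product.vec_eq_iff vector_scalar_mult_def)
  qed
  moreover have "w \<noteq> 0"
  proof
    assume "w = 0"
    hence "Matrix.vec_index v (idx a) = 0" for a :: 'm unfolding w_def Finite_Cartesian_Product.vec_eq_iff by simp
    hence "Matrix.vec_index v l = 0" if "l < CARD('m)" for l using idx_fr[OF that] by (metis (no_types))
    hence "v = 0\<^sub>v CARD('m)" using dv by (intro eq_vecI) auto
    thus False using v0 by simp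
  qed
  ultimately show ?thesis by blast
qed

lemma eig_from:
  fixes M :: "real^'m::finite^'m"
  assumes v0: "v \<noteq> 0" and ev: "cmat M *v v = z *s v"
  shows "eigenvalue (toM M) z"
proof -
  define u where "u = Matrix.vec CARD('m) (\<lambda>l. v $ fr l)"
  have uc: "u \<in> carrier_vec CARD('m)" unfolding u_def by simp
  have "u \<noteq> 0\<^sub>v CARD('m)"
  proof
    assume "u = 0\<^sub>v CARD('m)"
    hence "Matrix.vec_index u (idx a) = 0" for a :: 'm by simp
    moreover have "Matrix.vec_index u (idx a) = v $ a" for a :: 'm unfolding u_def by simp
    ultimately have "v $ a = 0" for a by metis
    hence "v = 0" by (simp add: Finite_Cartesian_Product.vec_eq_iff)
    thus False using v0 by simp
  qed
  moreover have "toM M *\<^sub>v u = z \<cdot>\<^sub>v u"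
  proof (rule eq_vecI)
    fix l assume "l < dim_vec (z \<cdot>\<^sub>v u)"
    hence l: "l < CARD('m)" unfolding u_def by simp
    have "Matrix.vec_index (toM M *\<^sub>v u) l = scalar_prod (Matrix.row (toM M) l) u" using l by simp
    also have "\<dots> = (\<Sum>l'\<in>{0..<CARD('m)}. complex_of_real (M $ fr l $ fr l') * v $ fr l')"
      using l unfolding u_def scalar_prod_def by (intro sum.cong) auto
    also have "\<dots> = (\<Sum>b\<in>UNIV. complex_of_real (M $ fr l $ b) * v $ b)" by (rule sum_fr)
    also have "\<dots> = (cmat M *v v) $ fr l" by (simp add: matrix_vector_mult_def cmat_def)
    also have "\<dots> = z * v $ fr l" unfolding ev by (simp add: vector_scalar_mult_def)
    also have "\<dots> = Matrix.vec_index (z \<cdot>\<^sub>v u) l" using l unfolding u_def by simp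
    finally show "Matrix.vec_index (toM M *\<^sub>v u) l = Matrix.vec_index (z \<cdot>\<^sub>v u) l" .
  qed (simp add: u_def)
  ultimately show ?thesis unfolding eigenvalue_def eigenvector_def using uc by auto
qed

lemma mpow_scale: "mpow (c *\<^sub>R (M::real^'m::finite^'m)) k = c^k *\<^sub>R mpow M k"
  by (induction k) (simp_all add: scalar_matrix_assoc[symmetric] matrix_scalar_ac)

lemma cmat_scale_mv: "cmat (c *\<^sub>R (M::real^'m::finite^'m)) *v v = complex_of_real c *s (cmat M *v v)"
  by (simp add: Finite_Cartesian_Product.vec_eq_iff matrix_vector_mult_def cmat_def sum_distrib_left mult_ac
        vector_scalar_mult_def)

lemma decay:
  fixes M :: "real^'m::finite^'m"
  assumes st: "schur_stable M"
  shows "\<exists>c r. 0 < r \<and> r < 1 \<and> (\<forall>k i j. \<bar>mpow M k $ i $ j\<bar> \<le> c * r^k)"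
proof -
  have n: "CARD('m) > 0" by simp
  define sr where "sr = spectral_radius (toM M)"
  have "sr \<in> norm ` spectrum (toM M)"
    unfolding sr_def by (rule spectral_radius_mem_max(1)[OF toM_carrier n])
  then obtain z0 where z0: "eigenvalue (toM M) z0" and srz: "sr = norm z0" unfolding spectrum_def by auto
  have sr1: "sr < 1" using eig_to[OF z0] st unfolding schur_stable_def srz by blast
  have sr0: "sr \<ge> 0" using srz by simp
  define r where "r = (1 + sr) / 2"
  have r: "0 < r" "r < 1" "sr < r" unfolding r_def using sr0 sr1 by auto
  define M1 where "M1 = (1/r) *\<^sub>R M"
  have "spectral_radius (toM M1) < 1"
  proof -
    have "spectral_radius (toM M1) \<in> norm ` spectrum (toM M1)"
      by (rule spectral_radius_mem_max(1)[OF toM_carrier n])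
    then obtain w where w: "eigenvalue (toM M1) w" and sw: "spectral_radius (toM M1) = norm w"
      unfolding spectrum_def by auto
    obtain v where v0: "v \<noteq> 0" and ev: "cmat M1 *v v = w *s v" using eig_to[OF w] by blast
    have "cmat M *v v = (complex_of_real r * w) *s v"
    proof -
      have "complex_of_real (1/r) *s (cmat M *v v) = w *s v" using ev unfolding M1_def cmat_scale_mv .
      hence "complex_of_real r *s (complex_of_real (1/r) *s (cmat M *v v)) = complex_of_real r *s (w *s v)" by simp
      thus ?thesis using r by (simp add: vector_smult_assoc)
    qed
    hence "eigenvalue (toM M) (complex_of_real r * w)" by (rule eig_from[OF v0])
    hence "norm (complex_of_real r * w) \<le> sr"
      unfolding sr_def by (intro spectral_radius_mem_max(2)[OF toM_carrier n]) (auto simp: spectrum_def)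
    hence "r * norm w \<le> sr" using r by (simp add: norm_mult)
    hence "r * norm w < r * 1" using r by linarith
    hence "norm w < 1" using r mult_less_cancel_left_pos by blast
    thus ?thesis using sw by simp
  qed
  then obtain c where c: "\<And>k. norm_bound (toM M1 ^\<^sub>m k) c"
    using spectral_radius_jnf_norm_bound_less_1_upper_triangular[OF toM_carrier] by blast
  have "\<bar>mpow M k $ i $ j\<bar> \<le> c * r^k" for k i j
  proof -
    have "\<forall>i'<CARD('m). \<forall>j'<CARD('m). \<bar>mpow M1 k $ fr i' $ fr j'\<bar> \<le> c"
      using c[of k] unfolding norm_bound_def by (simp add: toM_pow[symmetric])
    hence "\<bar>mpow M1 k $ i $ j\<bar> \<le> c" using idx_lt[of i] idx_lt[of j] by (metis fr_idx)
    hence "\<bar>(1/r)^k * mpow M k $ i $ j\<bar> \<le> c" unfolding M1_def mpow_scale by simp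
    hence "(1/r)^k * \<bar>mpow M k $ i $ j\<bar> \<le> c" using r by (simp add: abs_mult)
    hence "r^k * ((1/r)^k * \<bar>mpow M k $ i $ j\<bar>) \<le> r^k * c" using r by (intro mult_left_mono) auto
    moreover have "r^k * ((1/r)^k * \<bar>mpow M k $ i $ j\<bar>) = \<bar>mpow M k $ i $ j\<bar>"
      using r by (simp add: power_one_over field_simps)
    ultimately show ?thesis by (simp add: mult.commute)
  qed
  thus ?thesis using r by blast
qed


theorem theorem1:
  fixes A :: "real^'n^'n" and C :: "real^'n^'p"
  assumes "C \<noteq> 0" and "rank C = CARD('p)"
  shows "(\<exists>L F :: real^'p^'n. schur_stable (pi_block A C L F)) \<longleftrightarrow> detectable A C"
proof
  assume "\<exists>L F :: real^'p^'n. schur_stable (pi_block A C L F)"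
  then obtain L F :: "real^'p^'n" where st: "schur_stable (pi_block A C L F)" by blast
  obtain c r where "0 < r" "r < 1" "\<And>k i j. \<bar>mpow (pi_block A C L F) k $ i $ j\<bar> \<le> c * r^k"
    using decay[OF st] by blast
  thus "detectable A C" by (rule fwd_from_decay[OF assms(2)])
next
  assume "detectable A C"
  then obtain K :: "real^'p^'n" where "schur_stable (A + K ** C)" unfolding detectable_def by blast
  from back_dir[OF assms(2) this]
  show "\<exists>L F :: real^'p^'n. schur_stable (pi_block A C L F)" by blast
qed

end
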